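(* Let $p>2$ be an even integer such that $p/2$ is odd. Then there exists a subset $\mathcal{X}$ of $\mathbb{P}^2_\circ$ with $|\mathcal{X}|=|B(2,p)\cap\mathbb{P}^2_\circ|-1$ and $$\kappa(\mathcal{X})\le\kappa(B(2,p)\cap\mathbb{P}^2_\circ)-\frac{p}{2}+1.$$ Moreover, every subset $\mathcal{X}$ of $\mathbb{P}^2_\circ$ with these two properties satisfies at least one of: (i) some point of $B(2,p-1)\cap\mathbb{P}^2_\circ$ is not in $\mathcal{X}$; (ii) some point of $\mathcal{X}$ is not in $B(2,p)\cap\mathbb{P}^2_\circ$.
   Context: A point of $\mathbb{Z}^2$ is primitive if its coordinates are relatively prime; $\mathbb{P}^2_\circ$ denotes the set of primitive points of $\mathbb{Z}^2$ whose first non-zero coordinate is positive. $B(2,p)=\{x\in\mathbb{R}^2:\|x\|_1\le p\}$. For a finite $\mathcal{X}\subset\mathbb{R}^2$, $\kappa(\mathcal{X})=\max_{i\in\{1,2\}}\sum_{x\in\mathcal{X}}|x_i|$. *)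

theory Defs
  imports Main
begin

definition primitive :: "int \<times> int \<Rightarrow> bool" where
  "primitive x \<longleftrightarrow> gcd (fst x) (snd x) = 1"

definition Pcirc :: "(int \<times> int) set" where
  "Pcirc = {x. primitive x \<and> (fst x > 0 \<or> (fst x = 0 \<and> snd x > 0))}"

definition Bl1 :: "int \<Rightarrow> (int \<times> int) set" where
  "Bl1 p = {x. \<bar>fst x\<bar> + \<bar>snd x\<bar> \<le> p}"

definition kappa :: "(int \<times> int) set \<Rightarrow> int" where
  "kappa X = max (\<Sum>x\<in>X. \<bar>fst x\<bar>) (\<Sum>x\<in>X. \<bar>snd x\<bar>)"

end

theory Submission
  imports Defs
begin

lemma finS: "finite (Bl1 p \<inter> Pcirc)"
proof -
  have "Bl1 p \<subseteq> {-p..p} \<times> {-p..p}" by (auto simp: Bl1_def)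
  then show ?thesis by (meson finite_Int finite_SigmaI finite_atLeastAtMost_int finite_subset)
qed

definition nrm :: "int \<times> int \<Rightarrow> int \<times> int" where
  "nrm v = (if fst v > 0 \<or> (fst v = 0 \<and> snd v > 0) then v else (- fst v, - snd v))"

definition sig :: "int \<times> int \<Rightarrow> int \<times> int" where
  "sig v = nrm (snd v, fst v)"

lemma sig_in: "v \<in> Bl1 p \<inter> Pcirc \<Longrightarrow> sig v \<in> Bl1 p \<inter> Pcirc"
  apply (cases v)
  apply (auto simp: sig_def nrm_def Bl1_def Pcirc_def primitive_def gcd.commute)
  done

lemma sig_inj: "inj_on sig (Bl1 p \<inter> Pcirc)"
  unfolding inj_on_def
  apply (auto simp: sig_def nrm_def Bl1_def Pcirc_def primitive_def split: if_splits)
  done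

lemma sig_abs: "\<bar>snd (sig v)\<bar> = \<bar>fst v\<bar>"
  by (auto simp: sig_def nrm_def)

lemma symsum: "(\<Sum>x\<in>Bl1 p \<inter> Pcirc. \<bar>fst x\<bar>) = (\<Sum>x\<in>Bl1 p \<inter> Pcirc. \<bar>snd x\<bar>)"
proof -
  let ?S = "Bl1 p \<inter> Pcirc"
  have im: "sig ` ?S = ?S"
    using endo_inj_surj[OF finS _ sig_inj] sig_in by blast
  have "(\<Sum>x\<in>?S. \<bar>snd x\<bar>) = (\<Sum>x\<in>sig ` ?S. \<bar>snd x\<bar>)" using im by simp
  also have "\<dots> = (\<Sum>x\<in>?S. \<bar>snd (sig x)\<bar>)" using sum.reindex[OF sig_inj] by simp
  also have "\<dots> = (\<Sum>x\<in>?S. \<bar>fst x\<bar>)" using sig_abs by simp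
  finally show ?thesis by simp
qed

theorem proposition5p3:
  fixes p :: int
  assumes "p > 2" and "even p" and "odd (p div 2)"
  shows "(\<exists>X. X \<subseteq> Pcirc \<and> finite X \<and>
            card X = card (Bl1 p \<inter> Pcirc) - 1 \<and>
            kappa X \<le> kappa (Bl1 p \<inter> Pcirc) - p div 2 + 1)
       \<and> (\<forall>X. X \<subseteq> Pcirc \<and> finite X \<and>
            card X = card (Bl1 p \<inter> Pcirc) - 1 \<and>
            kappa X \<le> kappa (Bl1 p \<inter> Pcirc) - p div 2 + 1
          \<longrightarrow> (\<exists>x\<in>Bl1 (p - 1) \<inter> Pcirc. x \<notin> X) \<or> (\<exists>x\<in>X. x \<notin> Bl1 p \<inter> Pcirc))"
proof -
  define m where "m = p div 2"
  have pm: "p = 2 * m" using assms(2) m_def by auto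
  have om: "odd m" using assms(3) m_def by simp
  have m2: "m \<ge> 2" using pm assms(1) by linarith
  have "m \<noteq> 2" using om by auto
  then have m3: "m \<ge> 3" using m2 by linarith
  let ?S = "Bl1 p \<inter> Pcirc"
  define Sx where "Sx = (\<Sum>x\<in>?S. \<bar>fst x\<bar>)"
  define Sy where "Sy = (\<Sum>x\<in>?S. \<bar>snd x\<bar>)"
  have SxSy: "Sx = Sy" using symsum Sx_def Sy_def by simp
  have kS: "kappa ?S = Sx" using SxSy by (simp add: kappa_def Sx_def Sy_def)
  have part1: "\<exists>X. X \<subseteq> Pcirc \<and> finite X \<and>
            card X = card ?S - 1 \<and> kappa X \<le> kappa ?S - p div 2 + 1"
  proof -
    define u where "u = ((1::int), p - 1)"
    define v where "v = (p - 1, (1::int))"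
    define w where "w = (m, m + 1)"
    have gw: "gcd m (m + 1) = 1"
      by (metis add.commute gcd.commute gcd_add2 gcd_1_int)
    have uS: "u \<in> ?S" using assms by (auto simp: u_def Bl1_def Pcirc_def primitive_def)
    have vS: "v \<in> ?S" using assms by (auto simp: v_def Bl1_def Pcirc_def primitive_def)
    have uv: "u \<noteq> v" using assms by (auto simp: u_def v_def)
    have wP: "w \<in> Pcirc" using m3 gw by (auto simp: w_def Pcirc_def primitive_def)
    have wS: "w \<notin> ?S" using m3 pm by (auto simp: w_def Bl1_def)
    define X where "X = insert w (?S - {u, v})"
    have sub: "{u, v} \<subseteq> ?S" using uS vS by auto
    have finX: "finite X" using finS X_def by auto
    have XP: "X \<subseteq> Pcirc" using wP X_def by auto
    have c2: "card ?S \<ge> 2" using card_mono[OF finS sub] uv by simp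
    have wn0: "w \<notin> ?S - {u,v}" using wS by blast
    have "card X = card (?S - {u,v}) + 1" unfolding X_def using card_insert_disjoint[OF _ wn0] finS by simp
    also have "\<dots> = card ?S - 2 + 1" using card_Diff_subset[OF _ sub] uv by simp
    finally have cX: "card X = card ?S - 1" using c2 by simp
    have sd: "\<And>f::int\<times>int\<Rightarrow>int. sum f X = f w + sum f ?S - f u - f v"
    proof -
      fix f :: "int \<times> int \<Rightarrow> int"
      have wn: "w \<notin> ?S - {u,v}" using wS by blast
      have "sum f X = f w + sum f (?S - {u,v})" unfolding X_def using sum.insert[OF _ wn] finS by blast
      also have "sum f (?S - {u,v}) = sum f ?S - sum f {u,v}" using sum_diff[OF finS sub] by simp
      finally show "sum f X = f w + sum f ?S - f u - f v" using uv by simp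
    qed
    have e1: "\<bar>fst w\<bar> = m" "\<bar>snd w\<bar> = m + 1" using m3 by (simp_all add: w_def)
    have e2: "\<bar>fst u\<bar> = 1" "\<bar>snd u\<bar> = p - 1" using assms by (simp_all add: u_def)
    have e3: "\<bar>fst v\<bar> = p - 1" "\<bar>snd v\<bar> = 1" using assms by (simp_all add: v_def)
    have s1: "(\<Sum>x\<in>X. \<bar>fst x\<bar>) = m + Sx - 1 - (p - 1)"
      using sd[of "\<lambda>x. \<bar>fst x\<bar>"] e1 e2 e3 unfolding Sx_def by linarith
    have s2: "(\<Sum>x\<in>X. \<bar>snd x\<bar>) = m + 1 + Sy - (p - 1) - 1"
      using sd[of "\<lambda>x. \<bar>snd x\<bar>"] e1 e2 e3 unfolding Sy_def by linarith
    have mm: "p div 2 = m" using m_def by simp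
    have "kappa X \<le> kappa ?S - p div 2 + 1"
    proof -
      have kX: "kappa X = max (\<Sum>x\<in>X. \<bar>fst x\<bar>) (\<Sum>x\<in>X. \<bar>snd x\<bar>)" by (simp add: kappa_def)
      show ?thesis unfolding mm kS kX using s1 s2 SxSy pm by (simp add: max_def)
    qed
    then show ?thesis using finX XP cX by blast
  qed
  have part2: "\<forall>X. X \<subseteq> Pcirc \<and> finite X \<and>
            card X = card ?S - 1 \<and> kappa X \<le> kappa ?S - p div 2 + 1
          \<longrightarrow> (\<exists>x\<in>Bl1 (p - 1) \<inter> Pcirc. x \<notin> X) \<or> (\<exists>x\<in>X. x \<notin> ?S)"
  proof (intro allI impI)
    fix X
    assume H: "X \<subseteq> Pcirc \<and> finite X \<and> card X = card ?S - 1 \<and> kappa X \<le> kappa ?S - p div 2 + 1"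
    show "(\<exists>x\<in>Bl1 (p - 1) \<inter> Pcirc. x \<notin> X) \<or> (\<exists>x\<in>X. x \<notin> ?S)"
    proof (rule ccontr)
      assume "\<not> ?thesis"
      then have A: "Bl1 (p - 1) \<inter> Pcirc \<subseteq> X" and B: "X \<subseteq> ?S" by auto
      have oneS: "(1,0) \<in> ?S" using assms by (auto simp: Bl1_def Pcirc_def primitive_def)
      have cpos: "card ?S \<ge> 1" using finS oneS by (metis One_nat_def Suc_leI card_gt_0_iff empty_iff)
      have cd: "card (?S - X) = 1"
        using card_Diff_subset[OF _ B] H finite_subset[OF B finS] cpos by simp
      then obtain z where z: "?S - X = {z}" using card_1_singletonE by blast
      have XS: "X = ?S - {z}" using z B by blast
      have zS: "z \<in> ?S" using z by blast
      have zn: "z \<notin> Bl1 (p - 1)" using z A by blast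
      obtain a b where ab: "z = (a, b)" by (cases z)
      have nab: "\<bar>a\<bar> + \<bar>b\<bar> = p" using zS zn ab by (auto simp: Bl1_def)
      have gab: "gcd a b = 1" using zS ab by (auto simp: Pcirc_def primitive_def)
      have mn: "min \<bar>a\<bar> \<bar>b\<bar> \<le> m - 2"
      proof (rule ccontr)
        assume "\<not> ?thesis"
        then have c: "\<bar>a\<bar> \<ge> m - 1" "\<bar>b\<bar> \<ge> m - 1" by auto
        consider "\<bar>a\<bar> = m" "\<bar>b\<bar> = m" | "\<bar>a\<bar> = m - 1" "\<bar>b\<bar> = m + 1"
          | "\<bar>a\<bar> = m + 1" "\<bar>b\<bar> = m - 1" using c nab pm by linarith
        then show False
        proof cases
          case 1
          then have "m dvd a" "m dvd b" by (metis dvd_abs_iff dvd_refl)+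
          then have "m dvd gcd a b" by simp
          then show False using gab m3 by (simp add: zdvd_not_zless)
        next
          case 2
          have "even (m - 1)" "even (m + 1)" using om by simp_all
          then have "2 dvd \<bar>a\<bar>" "2 dvd \<bar>b\<bar>" using 2 by simp_all
          then have "2 dvd gcd a b" by simp
          then show False using gab by simp
        next
          case 3
          have "even (m - 1)" "even (m + 1)" using om by simp_all
          then have "2 dvd \<bar>a\<bar>" "2 dvd \<bar>b\<bar>" using 3 by simp_all
          then have "2 dvd gcd a b" by simp
          then show False using gab by simp
        qed
      qed
      have r1: "Sx = \<bar>fst z\<bar> + (\<Sum>x\<in>X. \<bar>fst x\<bar>)"
        using sum.remove[OF finS zS, of "\<lambda>x. \<bar>fst x\<bar>"] unfolding Sx_def XS .
      have r2: "Sy = \<bar>snd z\<bar> + (\<Sum>x\<in>X. \<bar>snd x\<bar>)"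
        using sum.remove[OF finS zS, of "\<lambda>x. \<bar>snd x\<bar>"] unfolding Sy_def XS .
      have "(\<Sum>x\<in>X. \<bar>fst x\<bar>) = Sx - \<bar>a\<bar>" using r1 ab by simp
      moreover have "(\<Sum>x\<in>X. \<bar>snd x\<bar>) = Sy - \<bar>b\<bar>" using r2 ab by simp
      ultimately have "kappa X \<ge> Sx - m + 2"
        using mn SxSy by (auto simp: kappa_def)
      then show False using H kS m_def by simp
    qed
  qed
  show ?thesis using part1 part2 by blast
qed

end
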